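(* In the setting described in the context, with $C_\phi$ a Lipschitz constant of $\phi$, for every $m$, $$\sum_{[C]\ \text{green cylinder}}\ \bigl\|H_{m}|_{[C]}\bigr\|_\infty\,\nu_m([C])\le e^{C_\phi/2}.$$
   Context: Setting: $A$ ($K\times K$) and $D$ ($N\times N$) are irreducible $\{0,1\}$-matrices; $M_0$ is a $(K+N)\times(K+N)$ $\{0,1\}$-matrix with diagonal blocks $A$, $D$ and some power with all entries positive; the alphabet is $\{\alpha_1,\dots,\alpha_K,\delta_1,\dots,\delta_N\}$; $\Sigma_0$ is the one-sided SFT for $M_0$ with shift $\sigma$ and metric $d(\omega,\omega')=2^{-\min\{k:\omega_k\ne\omega'_k\}}$; $\Sigma_A,\Sigma_D$ are the points with only $\alpha$-digits, resp. only $\delta$-digits; $\phi:\Sigma_0\to\mathbb R$ is Lipschitz with $|\phi(x)-\phi(y)|\le C_\phi d(x,y)$ and has the same pressure $P$ on $\Sigma_A$ and $\Sigma_D$. $\alpha_j\delta_l$ denotes any allowed word $\alpha$-digit then $\delta$-digit, $\delta_i\alpha_k$ any allowed word $\delta$-digit then $\alpha$-digit; $\delta^n,\alpha^n$ denote words of $n$ $\delta$-, resp. $\alpha$-digits. $A'\le A$, $D'\le D$ entrywise are $\{0,1\}$-matrices with $A'\ne A$, $D'\ne D$, rows of $A'$ indexed by $\alpha$-digits that can follow a $\delta$-digit nonzero, rows of $D'$ indexed by $\delta$-digits that can follow an $\alpha$-digit nonzero; $(n_m),(n'_m)$ increasing integer sequences tending to $\infty$. $\Sigma_m\subset\Sigma_0$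 is obtained by additionally forbidding: $\alpha_j\delta_l\delta^n\delta_i\alpha_k$ with $n<n'_m-2$, or with $n\ge n'_m-2$ and $\delta_l$ followed by the first $n'_m-2$ letters of $\delta^n$ not $D'$-eligible; $\delta_i\alpha_k\alpha^n\alpha_j\delta_l$ with $n<n_m-2$, or with $n\ge n_m-2$ and $\alpha_k$ followed by the first $n_m-2$ letters of $\alpha^n$ not $A'$-eligible (eligible = all consecutive transitions allowed by the matrix). $P_m$ is the pressure of $\phi$ on $\Sigma_m$. Induced scheme: green cylinders are the 2-cylinders $[\alpha_j\delta_l]$ and $[\delta_i\alpha_k]$, and $G$ is their union. For $x\in[\delta_i\alpha_k]$ its $g_m$-preimages are the points $y=\alpha_j\delta_l w x$ (with $w$ a $\delta$-word) such that $\alpha_j\delta_l w\delta_i\alpha_k$ is allowed in $\Sigma_m$, with return time $r_m(y)=|w|+2$; symmetrically for $x\in[\alpha_j\delta_l]$. The induced transfer operator is $\mathcal L_{G,m}f(x)=\sum_{y:\,g_m(y)=x}e^{S_{r_m(y)}\phi(y)-r_m(y)P_m}f(y)$, with $S_n\phi=\sum_{i<n}\phi\circ\sigma^i$. It has spectral radius 1; $\nu_m$ is the probability with $\int\mathcal L_{G,m}f\,d\nu_m=\int f\,d\nu_m$, and $H_m=\lim_{n}\frac1n\sum_{k=0}^{n-1}\mathcal L_{G,m}^k(\mathbf 1_G)$ (uniform limit) is the positive continuous eigenfunction $\mathcal L_{G,m}H_m=H_m$ with $\int H_m\,d\nu_m=1$. *)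

theory Defs
  imports "HOL-Probability.Probability"
begin

text \<open>Letters are natural numbers: the alpha-digit alpha_(j+1) is j (j < K),
  the delta-digit delta_(i+1) is K + i (i < N).  Square {0,1}-matrices of size d are
  functions nat => nat => nat of which only indices < d matter. The topology on nat => nat
  is the product topology (nat discrete), which induces the metric topology of d on Sigma_0.\<close>

definition isA :: "nat \<Rightarrow> nat \<Rightarrow> bool" where
  "isA K a \<longleftrightarrow> a < K"

definition isD :: "nat \<Rightarrow> nat \<Rightarrow> nat \<Rightarrow> bool" where
  "isD K N a \<longleftrightarrow> K \<le> a \<and> a < K + N"

fun mpow :: "nat \<Rightarrow> (nat \<Rightarrow> nat \<Rightarrow> nat) \<Rightarrow> nat \<Rightarrow> nat \<Rightarrow> nat \<Rightarrow> nat" where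
  "mpow d M 0 i j = (if i = j then 1 else 0)"
| "mpow d M (Suc n) i j = (\<Sum>k<d. mpow d M n i k * M k j)"

definition zero_one_matrix :: "nat \<Rightarrow> (nat \<Rightarrow> nat \<Rightarrow> nat) \<Rightarrow> bool" where
  "zero_one_matrix d M \<longleftrightarrow> (\<forall>i<d. \<forall>j<d. M i j \<in> {0, 1})"

definition irreducible_matrix :: "nat \<Rightarrow> (nat \<Rightarrow> nat \<Rightarrow> nat) \<Rightarrow> bool" where
  "irreducible_matrix d M \<longleftrightarrow> (\<forall>i<d. \<forall>j<d. \<exists>n>0. mpow d M n i j > 0)"

definition primitive_matrix :: "nat \<Rightarrow> (nat \<Rightarrow> nat \<Rightarrow> nat) \<Rightarrow> bool" where
  "primitive_matrix d M \<longleftrightarrow> (\<exists>p. \<forall>i<d. \<forall>j<d. mpow d M p i j > 0)"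

definition SFT :: "nat \<Rightarrow> (nat \<Rightarrow> nat \<Rightarrow> nat) \<Rightarrow> (nat \<Rightarrow> nat) set" where
  "SFT d M = {x. \<forall>k. x k < d \<and> M (x k) (x (Suc k)) = 1}"

definition shift :: "nat \<Rightarrow> (nat \<Rightarrow> nat) \<Rightarrow> (nat \<Rightarrow> nat)" where
  "shift r x = (\<lambda>i. x (i + r))"

definition sdist :: "(nat \<Rightarrow> nat) \<Rightarrow> (nat \<Rightarrow> nat) \<Rightarrow> real" where
  "sdist x y = (if x = y then 0 else 2 powr (- real (LEAST k. x k \<noteq> y k)))"

definition birk :: "((nat \<Rightarrow> nat) \<Rightarrow> real) \<Rightarrow> nat \<Rightarrow> (nat \<Rightarrow> nat) \<Rightarrow> real" where
  "birk \<phi> n x = (\<Sum>i<n. \<phi> (shift i x))"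

definition pressure :: "((nat \<Rightarrow> nat) \<Rightarrow> real) \<Rightarrow> (nat \<Rightarrow> nat) set \<Rightarrow> real" where
  "pressure \<phi> X = lim (\<lambda>n. ln (\<Sum>w\<in>(\<lambda>x. map x [0..<n]) ` X.
       exp (SUP x\<in>{x\<in>X. map x [0..<n] = w}. birk \<phi> n x)) / real n)"

definition only_A :: "nat \<Rightarrow> (nat \<Rightarrow> nat) set \<Rightarrow> (nat \<Rightarrow> nat) set" where
  "only_A K S = {x\<in>S. \<forall>k. isA K (x k)}"

definition only_D :: "nat \<Rightarrow> nat \<Rightarrow> (nat \<Rightarrow> nat) set \<Rightarrow> (nat \<Rightarrow> nat) set" where
  "only_D K N S = {x\<in>S. \<forall>k. isD K N (x k)}"

definition eligible :: "(nat \<Rightarrow> nat \<Rightarrow> nat) \<Rightarrow> nat list \<Rightarrow> bool" where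
  "eligible M l \<longleftrightarrow> (\<forall>i. Suc i < length l \<longrightarrow> M (l ! i) (l ! Suc i) = 1)"

text \<open>Forbidden words of Sigma_m; nm = n_m, nm' = n'_m.
  Delta-indices are letter - K, alpha-indices are the letters themselves.\<close>
definition forbidden_D :: "nat \<Rightarrow> nat \<Rightarrow> (nat \<Rightarrow> nat \<Rightarrow> nat) \<Rightarrow> nat \<Rightarrow> nat list \<Rightarrow> bool" where
  "forbidden_D K N D' nm' u \<longleftrightarrow> (\<exists>a dl w di b. u = [a, dl] @ w @ [di, b] \<and>
      isA K a \<and> isD K N dl \<and> (\<forall>c\<in>set w. isD K N c) \<and> isD K N di \<and> isA K b \<and>
      (length w < nm' - 2 \<or>
       (length w \<ge> nm' - 2 \<and> \<not> eligible D' (map (\<lambda>c. c - K) (dl # take (nm' - 2) w)))))"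

definition forbidden_A :: "nat \<Rightarrow> nat \<Rightarrow> (nat \<Rightarrow> nat \<Rightarrow> nat) \<Rightarrow> nat \<Rightarrow> nat list \<Rightarrow> bool" where
  "forbidden_A K N A' nm u \<longleftrightarrow> (\<exists>d ak w aj e. u = [d, ak] @ w @ [aj, e] \<and>
      isD K N d \<and> isA K ak \<and> (\<forall>c\<in>set w. isA K c) \<and> isA K aj \<and> isD K N e \<and>
      (length w < nm - 2 \<or>
       (length w \<ge> nm - 2 \<and> \<not> eligible A' (ak # take (nm - 2) w))))"

definition Sigma_m :: "nat \<Rightarrow> nat \<Rightarrow> (nat \<Rightarrow> nat \<Rightarrow> nat) \<Rightarrow> (nat \<Rightarrow> nat \<Rightarrow> nat) \<Rightarrow>
    (nat \<Rightarrow> nat \<Rightarrow> nat) \<Rightarrow> nat \<Rightarrow> nat \<Rightarrow> (nat \<Rightarrow> nat) set" where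
  "Sigma_m K N M0 A' D' nm nm' = {x \<in> SFT (K + N) M0. \<forall>p l.
      \<not> forbidden_D K N D' nm' (map x [p..<p + l]) \<and> \<not> forbidden_A K N A' nm (map x [p..<p + l])}"

definition cyl2 :: "nat \<Rightarrow> nat \<Rightarrow> (nat \<Rightarrow> nat) set" where
  "cyl2 a b = {x. x 0 = a \<and> x 1 = b}"

definition green_pairs :: "nat \<Rightarrow> nat \<Rightarrow> (nat \<Rightarrow> nat \<Rightarrow> nat) \<Rightarrow> (nat \<times> nat) set" where
  "green_pairs K N M0 = {(a, b). a < K + N \<and> b < K + N \<and> M0 a b = 1 \<and>
      (isA K a \<and> isD K N b \<or> isD K N a \<and> isA K b)}"

definition green :: "nat \<Rightarrow> nat \<Rightarrow> (nat \<Rightarrow> nat) set \<Rightarrow> (nat \<Rightarrow> nat) set" where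
  "green K N S = {x \<in> S. isA K (x 0) \<and> isD K N (x 1) \<or> isD K N (x 0) \<and> isA K (x 1)}"

text \<open>Preimages under the induced map g_m, paired with their return time:
  y = alpha delta w x (w a delta-word) with x in [delta alpha], r = |w| + 2, and symmetrically.
  Allowedness in Sigma_m is expressed by y being a point of Sigma_m.\<close>
definition gpre :: "nat \<Rightarrow> nat \<Rightarrow> (nat \<Rightarrow> nat) set \<Rightarrow> (nat \<Rightarrow> nat) \<Rightarrow> ((nat \<Rightarrow> nat) \<times> nat) set" where
  "gpre K N S x = {(y, r). y \<in> S \<and> 2 \<le> r \<and> shift r y = x \<and>
     ((isA K (y 0) \<and> (\<forall>i\<in>{1..<r}. isD K N (y i)) \<and> isD K N (x 0) \<and> isA K (x 1)) \<or>
      (isD K N (y 0) \<and> (\<forall>i\<in>{1..<r}. isA K (y i)) \<and> isA K (x 0) \<and> isD K N (x 1)))}"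

definition induced_op :: "nat \<Rightarrow> nat \<Rightarrow> (nat \<Rightarrow> nat) set \<Rightarrow> ((nat \<Rightarrow> nat) \<Rightarrow> real) \<Rightarrow> real \<Rightarrow>
    ((nat \<Rightarrow> nat) \<Rightarrow> real) \<Rightarrow> (nat \<Rightarrow> nat) \<Rightarrow> real" where
  "induced_op K N S \<phi> P f x =
     (\<Sum>\<^sub>\<infinity>(y, r)\<in>gpre K N S x. exp (birk \<phi> r y - real r * P) * f y)"

end

theory Submission
  imports Defs
begin

lemma isA_isD_disj: "isA K a \<Longrightarrow> isD K N a \<Longrightarrow> False"
  by (simp add: isA_def isD_def)

lemma forbD_mid:
  assumes "forbidden_D K N D' nm' u" "0 < i" "Suc i < length u"
  shows "isD K N (u ! i)"
proof -
  obtain a dl w di b where u: "u = [a, dl] @ w @ [di, b]" and h: "isD K N dl" "\<forall>c\<in>set w. isD K N c" "isD K N di"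
    using assms(1) unfolding forbidden_D_def by blast
  consider "i = 1" | "1 < i" "i < length w + 2" | "i = length w + 2"
    using assms(2,3) u by force
  then show ?thesis
  proof cases
    case 1 then show ?thesis using u h by simp
  next
    case 2
    define j where "j = i - 2"
    have j: "i = Suc (Suc j)" "j < length w" using 2 by (auto simp: j_def)
    then have "u ! i = w ! j" using u by (simp add: nth_append)
    then show ?thesis using h j by simp
  next
    case 3 then show ?thesis using u h by (simp add: nth_append)
  qed
qed

lemma forbA_mid:
  assumes "forbidden_A K N A' nm u" "0 < i" "Suc i < length u"
  shows "isA K (u ! i)"
proof -
  obtain a dl w di b where u: "u = [a, dl] @ w @ [di, b]" and h: "isA K dl" "\<forall>c\<in>set w. isA K c" "isA K di"
    using assms(1) unfolding forbidden_A_def by blast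
  consider "i = 1" | "1 < i" "i < length w + 2" | "i = length w + 2"
    using assms(2,3) u by force
  then show ?thesis
  proof cases
    case 1 then show ?thesis using u h by simp
  next
    case 2
    define j where "j = i - 2"
    have j: "i = Suc (Suc j)" "j < length w" using 2 by (auto simp: j_def)
    then have "u ! i = w ! j" using u by (simp add: nth_append)
    then show ?thesis using h j by simp
  next
    case 3 then show ?thesis using u h by (simp add: nth_append)
  qed
qed

lemma shift_SFT: "x \<in> SFT d M \<Longrightarrow> shift i x \<in> SFT d M"
  by (simp add: SFT_def shift_def)

lemma splice_in_Sigma:
  assumes y: "y \<in> Sigma_m K N M0 A' D' nm nm'" and x': "x' \<in> Sigma_m K N M0 A' D' nm nm'"
    and sh: "shift r y = x" and r: "1 \<le> r" and e0: "x' 0 = x 0" and e1: "x' 1 = x 1"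
    and col: "isA K (x 0) \<and> isD K N (x 1) \<or> isD K N (x 0) \<and> isA K (x 1)"
  shows "(\<lambda>i. if i < r then y i else x' (i - r)) \<in> Sigma_m K N M0 A' D' nm nm'"
    (is "?y \<in> _")
proof -
  have yr: "\<And>i. y (i + r) = x i" using sh by (metis shift_def)
  have agree: "\<And>i. i < r + 2 \<Longrightarrow> ?y i = y i"
  proof -
    fix i assume "i < r + 2"
    then consider "i < r" | "i = r" | "i = r + 1" by linarith
    then show "?y i = y i"
      using yr[of 0] yr[of 1] e0 e1 by cases auto
  qed
  have ySFT: "y \<in> SFT (K+N) M0" and x'SFT: "x' \<in> SFT (K+N) M0"
    using y x' by (auto simp: Sigma_m_def)
  have "?y \<in> SFT (K+N) M0"
    unfolding SFT_def
  proof (intro CollectI allI conjI)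
    fix k
    show "?y k < K + N" using ySFT x'SFT by (auto simp: SFT_def)
    show "M0 (?y k) (?y (Suc k)) = 1"
    proof (cases "Suc k < r")
      case True then show ?thesis using ySFT by (auto simp: SFT_def)
    next
      case False
      show ?thesis
      proof (cases "k < r")
        case True
        then have "k = r - 1" "Suc k = r" using False by auto
        have "M0 (y k) (y (Suc k)) = 1" using ySFT by (simp add: SFT_def)
        moreover have "x' (Suc k - r) = y (Suc k)" using \<open>Suc k = r\<close> e0 yr[of 0] by simp
        ultimately show ?thesis using True False by simp
      next
        case False
        then have "Suc k - r = Suc (k - r)" by auto
        then show ?thesis using False x'SFT by (auto simp: SFT_def)
      qed
    qed
  qed
  moreover have "\<not> forbidden_D K N D' nm' (map ?y [p..<p + l]) \<and> \<not> forbidden_A K N A' nm (map ?y [p..<p + l])" for p l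
  proof (cases "r \<le> p")
    case True
    have "map ?y [p..<p + l] = map x' [p - r..<p - r + l]"
    proof (rule nth_equalityI)
      fix i assume "i < length (map ?y [p..<p + l])"
      then have "i < l" by simp
      then show "map ?y [p..<p + l] ! i = map x' [p - r..<p - r + l] ! i"
        using True by (simp add: add.commute add.left_commute)
    qed simp
    then show ?thesis using x' unfolding Sigma_m_def by auto
  next
    case False
    show ?thesis
    proof (cases "p + l \<le> r + 2")
      case True
      have meq: "map ?y [p..<p + l] = map y [p..<p + l]"
        proof (rule nth_equalityI)
        fix i assume "i < length (map ?y [p..<p + l])"
        then have "i < l" by simp
        then have "p + i < r + 2" using True by simp
        from agree[OF this] \<open>i < l\<close>
        show "map ?y [p..<p + l] ! i = map y [p..<p + l] ! i"
          by (simp split: if_splits)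
      qed simp
      show ?thesis unfolding meq using y unfolding Sigma_m_def by blast
    next
      case F2: False
      let ?u = "map ?y [p..<p + l]"
      have l: "length ?u = l" by simp
      have u1: "?u ! (r - p) = x 0" using False F2 agree[of r] yr[of 0] by simp
      have u2: "?u ! (Suc (r - p)) = x 1" using False F2 agree[of "r+1"] yr[of 1]
        by (simp add: Suc_diff_le)
      have i1: "0 < r - p" "Suc (r - p) < l" "Suc (Suc (r - p)) < l" using False F2 by auto
      show ?thesis
      proof
        show "\<not> forbidden_D K N D' nm' ?u"
          using forbD_mid[of K N D' nm' ?u "r - p"] forbD_mid[of K N D' nm' ?u "Suc (r - p)"] i1 u1 u2 col l
            isA_isD_disj by auto
        show "\<not> forbidden_A K N A' nm ?u"
          using forbA_mid[of K N A' nm ?u "r - p"] forbA_mid[of K N A' nm ?u "Suc (r - p)"] i1 u1 u2 col l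
            isA_isD_disj by auto
      qed
    qed
  qed
  ultimately show ?thesis unfolding Sigma_m_def by blast
qed

lemma sdist_bound:
  assumes "\<forall>i<m. u i = v i"
  shows "sdist u v \<le> (1/2::real) ^ m"
proof (cases "u = v")
  case True then show ?thesis by (simp add: sdist_def)
next
  case False
  then obtain k0 where "u k0 \<noteq> v k0" by auto
  then have "u (LEAST k. u k \<noteq> v k) \<noteq> v (LEAST k. u k \<noteq> v k)" by (rule LeastI)
  then have mk: "m \<le> (LEAST k. u k \<noteq> v k)" using assms by (meson not_le)
  have "sdist u v = 2 powr (- real (LEAST k. u k \<noteq> v k))" using False by (simp add: sdist_def)
  also have "\<dots> = (1/2) ^ (LEAST k. u k \<noteq> v k)"
    by (simp add: powr_minus powr_realpow power_one_over inverse_eq_divide)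
  also have "\<dots> \<le> (1/2) ^ m" using mk by (simp add: power_decreasing)
  finally show ?thesis .
qed

lemma geom_sum: "(\<Sum>i<r. (1/2::real) ^ (n + r - i)) = (1/2) ^ n - (1/2) ^ (n + r)"
proof (induction r)
  case 0 then show ?case by simp
next
  case (Suc r)
  have "(\<Sum>i<Suc r. (1/2::real) ^ (n + Suc r - i)) = (\<Sum>i<r. (1/2::real) ^ (n + Suc r - i)) + (1/2) ^ Suc n"
    by simp
  also have "(\<Sum>i<r. (1/2::real) ^ (n + Suc r - i)) = (1/2) * (\<Sum>i<r. (1/2::real) ^ (n + r - i))"
    unfolding sum_distrib_left
  proof (rule sum.cong)
    fix i assume "i \<in> {..<r}"
    then have "n + Suc r - i = Suc (n + r - i)" by auto
    then show "(1/2::real) ^ (n + Suc r - i) = 1/2 * (1/2) ^ (n + r - i)" by simp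
  qed simp
  finally show ?case using Suc by simp
qed

definition spl :: "(nat \<Rightarrow> nat) \<Rightarrow> (nat \<Rightarrow> nat) \<times> nat \<Rightarrow> (nat \<Rightarrow> nat) \<times> nat" where
  "spl x' p = (case p of (y, r) \<Rightarrow> (\<lambda>i. if i < r then y i else x' (i - r), r))"

lemma spl_simp [simp]: "spl x' (y, r) = (\<lambda>i. if i < r then y i else x' (i - r), r)"
  by (simp add: spl_def)

lemma spl_gpre:
  assumes x: "x \<in> Sigma_m K N M0 A' D' nm nm'" and x': "x' \<in> Sigma_m K N M0 A' D' nm nm'"
    and e0: "x' 0 = x 0" and e1: "x' 1 = x 1"
    and p: "p \<in> gpre K N (Sigma_m K N M0 A' D' nm nm') x"
  shows "spl x' p \<in> gpre K N (Sigma_m K N M0 A' D' nm nm') x'"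
    and "spl x (spl x' p) = p"
proof -
  obtain y r where pyr: "p = (y, r)" by force
  have y: "y \<in> Sigma_m K N M0 A' D' nm nm'" and r: "2 \<le> r" and sh: "shift r y = x"
    and col: "(isA K (y 0) \<and> (\<forall>i\<in>{1..<r}. isD K N (y i)) \<and> isD K N (x 0) \<and> isA K (x 1)) \<or>
      (isD K N (y 0) \<and> (\<forall>i\<in>{1..<r}. isA K (y i)) \<and> isA K (x 0) \<and> isD K N (x 1))"
    using p unfolding pyr gpre_def by auto
  have col2: "isA K (x 0) \<and> isD K N (x 1) \<or> isD K N (x 0) \<and> isA K (x 1)" using col by blast
  let ?y = "\<lambda>i. if i < r then y i else x' (i - r)"
  have yS: "?y \<in> Sigma_m K N M0 A' D' nm nm'"
    using splice_in_Sigma[OF y x' sh _ e0 e1 col2] r by simp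
  have sh': "shift r ?y = x'" by (simp add: shift_def)
  have "(?y, r) \<in> gpre K N (Sigma_m K N M0 A' D' nm nm') x'"
    unfolding gpre_def using yS r sh' col e0 e1 by auto
  then show "spl x' p \<in> gpre K N (Sigma_m K N M0 A' D' nm nm') x'"
    by (simp add: pyr)
  have yr: "\<And>i. y (i + r) = x i" using sh by (metis shift_def)
  have "(\<lambda>i. if i < r then y i else x (i - r)) = y"
  proof
    fix i show "(if i < r then y i else x (i - r)) = y i"
      using yr[of "i - r"] by auto
  qed
  then show "spl x (spl x' p) = p" by (simp add: pyr cong: if_cong)
qed

lemma infsum_le_scaled:
  fixes f g :: "'a \<Rightarrow> real"
  assumes f0: "\<And>p. p \<in> A \<Longrightarrow> 0 \<le> f p" and g0: "\<And>p. p \<in> A \<Longrightarrow> 0 \<le> g p"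
    and fg: "\<And>p. p \<in> A \<Longrightarrow> f p \<le> E * g p" and gf: "\<And>p. p \<in> A \<Longrightarrow> g p \<le> E * f p"
    and E: "0 \<le> E"
  shows "infsum f A \<le> E * infsum g A"
proof (cases "g summable_on A")
  case True
  then have Eg: "(\<lambda>p. E * g p) summable_on A" by (rule summable_on_cmult_right)
  then have "f summable_on A" using fg f0 by (rule summable_on_comparison_test)
  then have "infsum f A \<le> infsum (\<lambda>p. E * g p) A" using Eg fg by (rule infsum_mono)
  then show ?thesis by (simp add: infsum_cmult_right')
next
  case False
  have "\<not> f summable_on A"
  proof
    assume "f summable_on A"
    then have "(\<lambda>p. E * f p) summable_on A" by (rule summable_on_cmult_right)
    then have "g summable_on A" using gf g0 by (rule summable_on_comparison_test)
    then show False using False by simp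
  qed
  then show ?thesis using False by (simp add: infsum_not_exists)
qed

context
  fixes K N :: nat and M0 A' D' :: "nat \<Rightarrow> nat \<Rightarrow> nat" and nm nm' :: nat
    and \<phi> :: "(nat \<Rightarrow> nat) \<Rightarrow> real" and C P :: real
  assumes lip: "\<forall>x\<in>SFT (K + N) M0. \<forall>y\<in>SFT (K + N) M0. \<bar>\<phi> x - \<phi> y\<bar> \<le> C * sdist x y"
    and C0: "0 \<le> C"
begin

abbreviation "SS \<equiv> Sigma_m K N M0 A' D' nm nm'"
abbreviation "LL \<equiv> induced_op K N SS \<phi> P"
abbreviation "gg j \<equiv> (LL ^^ j) (indicator (green K N SS))"

lemma SS_SFT: "x \<in> SS \<Longrightarrow> x \<in> SFT (K + N) M0"
  by (simp add: Sigma_m_def)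

lemma gg_nonneg: "0 \<le> gg j x"
proof (induction j arbitrary: x)
  case 0 then show ?case by simp
next
  case (Suc j)
  have "gg (Suc j) x = (\<Sum>\<^sub>\<infinity>(y, r)\<in>gpre K N SS x. exp (birk \<phi> r y - real r * P) * gg j y)"
    by (simp only: funpow.simps comp_apply induced_op_def)
  also have "0 \<le> \<dots>"
    by (rule infsum_nonneg) (auto intro!: mult_nonneg_nonneg Suc.IH)
  finally show ?case .
qed

lemma birk_bound:
  assumes y: "y \<in> SFT (K + N) M0" and y': "y' \<in> SFT (K + N) M0"
    and ag: "\<forall>i<n + r. y i = y' i"
  shows "birk \<phi> r y - birk \<phi> r y' \<le> C * ((1/2) ^ n - (1/2) ^ (n + r))"
proof -
  have "birk \<phi> r y - birk \<phi> r y' = (\<Sum>i<r. \<phi> (shift i y) - \<phi> (shift i y'))"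
    by (simp add: birk_def sum_subtractf)
  also have "\<dots> \<le> (\<Sum>i<r. C * (1/2) ^ (n + r - i))"
  proof (rule sum_mono)
    fix i assume i: "i \<in> {..<r}"
    have "\<forall>k<n + r - i. shift i y k = shift i y' k"
      using ag i by (simp add: shift_def)
    then have "sdist (shift i y) (shift i y') \<le> (1/2) ^ (n + r - i)" by (rule sdist_bound)
    moreover have "\<bar>\<phi> (shift i y) - \<phi> (shift i y')\<bar> \<le> C * sdist (shift i y) (shift i y')"
      using lip shift_SFT[OF y] shift_SFT[OF y'] by blast
    ultimately show "\<phi> (shift i y) - \<phi> (shift i y') \<le> C * (1/2) ^ (n + r - i)"
      using C0 by (smt (verit) mult_left_mono)
  qed
  also have "\<dots> = C * ((1/2) ^ n - (1/2) ^ (n + r))"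
    by (simp add: sum_distrib_left[symmetric] geom_sum)
  finally show ?thesis .
qed

lemma distortion:
  "2 \<le> n \<Longrightarrow> x \<in> SS \<Longrightarrow> x' \<in> SS \<Longrightarrow> \<forall>i<n. x i = x' i \<Longrightarrow>
     gg j x \<le> exp (C * (1/2) ^ n) * gg j x'"
proof (induction j arbitrary: n x x')
  case 0
  have "x 0 = x' 0" "x 1 = x' 1" using 0 by auto
  then have "indicator (green K N SS) x = (indicator (green K N SS) x' :: real)"
    using 0 by (simp add: green_def indicator_def)
  moreover have "1 \<le> exp (C * (1/2) ^ n)" using C0 by simp
  moreover have "0 \<le> (indicator (green K N SS) x' :: real)" by simp
  ultimately show ?case using mult_right_mono[of 1 "exp (C * (1/2) ^ n)" "indicator (green K N SS) x' :: real"]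
    by simp
next
  case (Suc j)
  define t where "t = (\<lambda>(y, r). exp (birk \<phi> r y - real r * P) * gg j y)"
  have trm: "t p \<le> exp (C * (1/2) ^ n) * t (spl x' p)"
    if n2: "2 \<le> n" and x: "x \<in> SS" and x': "x' \<in> SS" and ag: "\<forall>i<n. x i = x' i"
      and p: "p \<in> gpre K N SS x" for n x x' p
  proof -
    obtain y r where pyr: "p = (y, r)" by force
    have y: "y \<in> SS" and sh: "shift r y = x" using p unfolding pyr gpre_def by auto
    let ?y = "\<lambda>i. if i < r then y i else x' (i - r)"
    have e0: "x' 0 = x 0" "x' 1 = x 1" using ag n2 by auto
    have yS: "?y \<in> SS" using spl_gpre(1)[OF x x' e0 p] unfolding pyr gpre_def by simp
    have yr: "\<And>i. y (i + r) = x i" using sh by (metis shift_def)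
    have ag2: "\<forall>i<n + r. y i = ?y i"
    proof (intro allI impI)
      fix i assume "i < n + r"
      then show "y i = ?y i" using yr[of "i - r"] ag by auto
    qed
    have IH: "gg j y \<le> exp (C * (1/2) ^ (n + r)) * gg j ?y"
      using Suc.IH[of "n + r" y ?y] n2 y yS ag2 by simp
    have B: "birk \<phi> r y - birk \<phi> r ?y \<le> C * ((1/2) ^ n - (1/2) ^ (n + r))"
      using birk_bound[OF SS_SFT[OF y] SS_SFT[OF yS] ag2] .
    have "exp (birk \<phi> r y - real r * P) \<le> exp (C * ((1/2) ^ n - (1/2) ^ (n + r))) * exp (birk \<phi> r ?y - real r * P)"
      unfolding exp_add[symmetric] using B by simp
    then have "t p \<le> (exp (C * ((1/2) ^ n - (1/2) ^ (n + r))) * exp (birk \<phi> r ?y - real r * P)) *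
        (exp (C * (1/2) ^ (n + r)) * gg j ?y)"
      unfolding t_def pyr using IH gg_nonneg[of j y] by (auto intro!: mult_mono)
    also have "\<dots> = exp (C * (1/2) ^ n) * (exp (birk \<phi> r ?y - real r * P) * gg j ?y)"
      by (simp add: mult_ac exp_add[symmetric] algebra_simps)
    also have "\<dots> = exp (C * (1/2) ^ n) * t (spl x' p)"
      by (simp add: t_def pyr)
    finally show ?thesis .
  qed
  have e0: "x' 0 = x 0" "x' 1 = x 1" using Suc.prems by auto
  have "gg (Suc j) x = infsum t (gpre K N SS x)"
    by (simp only: funpow.simps comp_apply induced_op_def t_def)
  also have "\<dots> \<le> exp (C * (1/2) ^ n) * infsum (\<lambda>p. t (spl x' p)) (gpre K N SS x)"
  proof (rule infsum_le_scaled)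
    fix p assume p: "p \<in> gpre K N SS x"
    show "0 \<le> t p" by (auto simp: t_def gg_nonneg split: prod.splits)
    show "0 \<le> t (spl x' p)" by (auto simp: t_def gg_nonneg split: prod.splits)
    show "t p \<le> exp (C * (1/2) ^ n) * t (spl x' p)" using trm Suc.prems p by blast
    have p': "spl x' p \<in> gpre K N SS x'" and bk: "spl x (spl x' p) = p"
      using spl_gpre[OF Suc.prems(2,3) e0 p] by auto
    have "t (spl x' p) \<le> exp (C * (1/2) ^ n) * t (spl x (spl x' p))"
      using trm[OF Suc.prems(1,3,2) _ p'] Suc.prems(4) by auto
    then show "t (spl x' p) \<le> exp (C * (1/2) ^ n) * t p" using bk by simp
  qed simp
  also have "infsum (\<lambda>p. t (spl x' p)) (gpre K N SS x) = infsum t (gpre K N SS x')"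
  proof (rule infsum_reindex_bij_witness[where i = "spl x" and j = "spl x'"])
    fix a assume a: "a \<in> gpre K N SS x"
    show "spl x (spl x' a) = a" using spl_gpre[OF Suc.prems(2,3) e0 a] by auto
    show "spl x' a \<in> gpre K N SS x'" using spl_gpre[OF Suc.prems(2,3) e0 a] by auto
  next
    fix b assume b: "b \<in> gpre K N SS x'"
    have e0': "x 0 = x' 0" "x 1 = x' 1" using e0 by auto
    show "spl x' (spl x b) = b" using spl_gpre[OF Suc.prems(3,2) e0' b] by auto
    show "spl x b \<in> gpre K N SS x" using spl_gpre[OF Suc.prems(3,2) e0' b] by auto
  qed simp
  also have "infsum t (gpre K N SS x') = gg (Suc j) x'"
    by (simp only: funpow.simps comp_apply induced_op_def t_def)
  finally show ?case by simp
qed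

end

lemma open_cyl: "open {z::nat\<Rightarrow>nat. \<forall>i<n. z i = x i}"
proof -
  have "{z::nat\<Rightarrow>nat. \<forall>i<n. z i = x i} = (\<Inter>i\<in>{..<n}. (\<lambda>z. z i) -` {x i})" by auto
  moreover have "open (\<Inter>i\<in>{..<n}. (\<lambda>z::nat\<Rightarrow>nat. z i) -` {x i})"
    by (intro open_INT ballI finite_lessThan open_vimage continuous_on_product_coordinates) (auto intro: discrete_topology_class.open_discrete)
  ultimately show ?thesis by simp
qed

lemma open_cyl2: "open (cyl2 a b)"
proof -
  have "cyl2 a b = (\<lambda>z::nat\<Rightarrow>nat. z 0) -` {a} \<inter> (\<lambda>z. z 1) -` {b}"
    by (auto simp: cyl2_def)
  moreover have "open ((\<lambda>z::nat\<Rightarrow>nat. z 0) -` {a} \<inter> (\<lambda>z. z 1) -` {b})"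
    by (intro open_Int open_vimage continuous_on_product_coordinates discrete_topology_class.open_discrete)
  ultimately show ?thesis by simp
qed

context
  fixes K N :: nat and M0 A' D' :: "nat \<Rightarrow> nat \<Rightarrow> nat" and nm nm' :: nat
    and \<phi> :: "(nat \<Rightarrow> nat) \<Rightarrow> real" and C P :: real
  assumes lip: "\<forall>x\<in>SFT (K + N) M0. \<forall>y\<in>SFT (K + N) M0. \<bar>\<phi> x - \<phi> y\<bar> \<le> C * sdist x y"
    and C0: "0 \<le> C"
begin

lemma gg_cont: "continuous_on (SS K N M0 A' D' nm nm') (gg K N M0 A' D' nm nm' \<phi> P j)"
  unfolding continuous_on_topological
proof (intro ballI allI impI)
  let ?g = "gg K N M0 A' D' nm nm' \<phi> P j"
  let ?S = "SS K N M0 A' D' nm nm'"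
  fix x B assume x: "x \<in> ?S" and B: "open B" "?g x \<in> B"
  obtain e where e: "e > 0" "ball (?g x) e \<subseteq> B" using B openE by blast
  define E where "E = (\<lambda>n::nat. exp (C * (1/2) ^ n))"
  have "(\<lambda>n. (1/2::real) ^ n) \<longlonglongrightarrow> 0" by (rule LIMSEQ_power_zero) simp
  then have "(\<lambda>n. (E n - 1) * E n * ?g x) \<longlonglongrightarrow> (exp (C * 0) - 1) * exp (C * 0) * ?g x"
    unfolding E_def by (intro tendsto_intros) auto
  then have "(\<lambda>n. (E n - 1) * E n * ?g x) \<longlonglongrightarrow> 0" by simp
  then have "eventually (\<lambda>n. (E n - 1) * E n * ?g x < e) sequentially"
    using e(1) by (rule order_tendstoD)
  then obtain N0 where N0: "\<And>n. n \<ge> N0 \<Longrightarrow> (E n - 1) * E n * ?g x < e"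
    by (auto simp: eventually_sequentially)
  define n where "n = max N0 2"
  have n2: "2 \<le> n" and small: "(E n - 1) * E n * ?g x < e" using N0 by (auto simp: n_def)
  show "\<exists>A. open A \<and> x \<in> A \<and> (\<forall>y\<in>?S. y \<in> A \<longrightarrow> ?g y \<in> B)"
  proof (intro exI conjI ballI impI)
    show "open {z. \<forall>i<n. z i = x i}" by (rule open_cyl)
    show "x \<in> {z. \<forall>i<n. z i = x i}" by simp
    fix y assume y: "y \<in> ?S" "y \<in> {z. \<forall>i<n. z i = x i}"
    have d1: "?g y \<le> E n * ?g x" unfolding E_def
      using distortion[OF lip C0 n2 y(1) x] y(2) by simp
    have d2: "?g x \<le> E n * ?g y" unfolding E_def
      using distortion[OF lip C0 n2 x y(1)] y(2) by simp
    have E1: "1 \<le> E n" unfolding E_def using C0 by simp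
    have gx: "0 \<le> ?g x" and gy: "0 \<le> ?g y" using gg_nonneg[OF lip C0] by auto
    have "?g y - ?g x \<le> (E n - 1) * ?g x" using d1 by (simp add: algebra_simps)
    also have "\<dots> \<le> (E n - 1) * E n * ?g x"
    proof -
      have "1 * ?g x \<le> E n * ?g x" by (rule mult_right_mono[OF E1 gx])
      then have "(E n - 1) * ?g x \<le> (E n - 1) * (E n * ?g x)"
        by (intro mult_left_mono) (use E1 in auto)
      then show ?thesis by (simp only: mult.assoc)
    qed
    finally have u1: "?g y - ?g x \<le> (E n - 1) * E n * ?g x" .
    have "?g x - ?g y \<le> (E n - 1) * ?g y" using d2 by (simp add: algebra_simps)
    also have "\<dots> \<le> (E n - 1) * (E n * ?g x)" by (intro mult_left_mono d1) (use E1 in auto)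
    finally have u2: "?g x - ?g y \<le> (E n - 1) * E n * ?g x" by (simp add: mult.assoc)
    have "dist (?g y) (?g x) < e" using u1 u2 small by (simp add: dist_real_def abs_le_iff)
    then show "?g y \<in> B" using e(2) by (auto simp: dist_commute)
  qed
qed

lemma gg_bound: "\<exists>B. \<forall>x\<in>SS K N M0 A' D' nm nm'. \<bar>gg K N M0 A' D' nm nm' \<phi> P j x\<bar> \<le> B"
proof -
  let ?g = "gg K N M0 A' D' nm nm' \<phi> P j"
  let ?S = "SS K N M0 A' D' nm nm'"
  define ref where "ref = (\<lambda>a b. SOME z. z \<in> ?S \<and> z 0 = a \<and> z 1 = b)"
  define I where "I = {..<K+N} \<times> {..<K+N}"
  define B where "B = exp (C * (1/2)^2) * (\<Sum>p\<in>I. ?g (ref (fst p) (snd p)))"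
  have "\<forall>x\<in>?S. \<bar>?g x\<bar> \<le> B"
  proof
    fix x assume x: "x \<in> ?S"
    have "x \<in> SFT (K+N) M0" using x by (simp add: Sigma_m_def)
    then have pI: "(x 0, x 1) \<in> I" by (simp add: SFT_def I_def)
    have "\<exists>z. z \<in> ?S \<and> z 0 = x 0 \<and> z 1 = x 1" using x by blast
    then have "ref (x 0) (x 1) \<in> ?S \<and> ref (x 0) (x 1) 0 = x 0 \<and> ref (x 0) (x 1) 1 = x 1"
      unfolding ref_def by (rule someI_ex)
    then have r: "ref (x 0) (x 1) \<in> ?S" "\<forall>i<2. x i = ref (x 0) (x 1) i"
      by (auto simp: less_2_cases_iff)
    have "\<bar>?g x\<bar> = ?g x" using gg_nonneg[OF lip C0] by simp
    also have "\<dots> \<le> exp (C * (1/2)^2) * ?g (ref (x 0) (x 1))"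
      using distortion[OF lip C0 _ x r(1) r(2)] by simp
    also have "exp (C * (1/2)^2) * ?g (ref (x 0) (x 1)) \<le> B"
    proof -
      have "?g (ref (fst (x 0, x 1)) (snd (x 0, x 1))) \<le> (\<Sum>p\<in>I. ?g (ref (fst p) (snd p)))"
        by (rule member_le_sum[OF pI]) (auto simp: I_def gg_nonneg[OF lip C0])
      then show ?thesis unfolding B_def by simp
    qed
    finally show "\<bar>?g x\<bar> \<le> B" .
  qed
  then show ?thesis by blast
qed

end

theorem lemma3:
  fixes K N :: nat
    and A D M0 A' D' :: "nat \<Rightarrow> nat \<Rightarrow> nat"
    and \<phi> :: "(nat \<Rightarrow> nat) \<Rightarrow> real" and C\<phi> :: real
    and n n' :: "nat \<Rightarrow> nat" and m :: nat
    and \<nu> :: "(nat \<Rightarrow> nat) measure" and H :: "(nat \<Rightarrow> nat) \<Rightarrow> real"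
  assumes KN: "0 < K" "0 < N"
    and A: "zero_one_matrix K A" "irreducible_matrix K A"
    and D: "zero_one_matrix N D" "irreducible_matrix N D"
    and M0: "zero_one_matrix (K + N) M0" "primitive_matrix (K + N) M0"
      "\<forall>i<K. \<forall>j<K. M0 i j = A i j" "\<forall>i<N. \<forall>j<N. M0 (K + i) (K + j) = D i j"
    and lip: "\<forall>x\<in>SFT (K + N) M0. \<forall>y\<in>SFT (K + N) M0. \<bar>\<phi> x - \<phi> y\<bar> \<le> C\<phi> * sdist x y"
    and P_eq: "pressure \<phi> (only_A K (SFT (K + N) M0)) = pressure \<phi> (only_D K N (SFT (K + N) M0))"
    and A': "zero_one_matrix K A'" "\<forall>i<K. \<forall>j<K. A' i j \<le> A i j" "\<exists>i<K. \<exists>j<K. A' i j \<noteq> A i j"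
      "\<forall>k<K. (\<exists>i<N. M0 (K + i) k = 1) \<longrightarrow> (\<exists>j<K. A' k j \<noteq> 0)"
    and D': "zero_one_matrix N D'" "\<forall>i<N. \<forall>j<N. D' i j \<le> D i j" "\<exists>i<N. \<exists>j<N. D' i j \<noteq> D i j"
      "\<forall>l<N. (\<exists>j<K. M0 j (K + l) = 1) \<longrightarrow> (\<exists>i<N. D' l i \<noteq> 0)"
    and seqs: "strict_mono n" "strict_mono n'"
    and nu: "prob_space \<nu>"
      "sets \<nu> = sets (restrict_space borel (Sigma_m K N M0 A' D' (n m) (n' m)))"
      "\<forall>f. continuous_on (Sigma_m K N M0 A' D' (n m) (n' m)) f \<longrightarrow>
         (\<integral>x. induced_op K N (Sigma_m K N M0 A' D' (n m) (n' m)) \<phi>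
                 (pressure \<phi> (Sigma_m K N M0 A' D' (n m) (n' m))) f x \<partial>\<nu>) = (\<integral>x. f x \<partial>\<nu>)"
    and H: "uniform_limit (Sigma_m K N M0 A' D' (n m) (n' m))
      (\<lambda>k x. (\<Sum>j<k. ((induced_op K N (Sigma_m K N M0 A' D' (n m) (n' m)) \<phi>
                 (pressure \<phi> (Sigma_m K N M0 A' D' (n m) (n' m)))) ^^ j)
                 (indicator (green K N (Sigma_m K N M0 A' D' (n m) (n' m)))) x) / real k)
      H sequentially"
  shows "(\<Sum>(a, b)\<in>green_pairs K N M0.
           (SUP x\<in>cyl2 a b \<inter> Sigma_m K N M0 A' D' (n m) (n' m). \<bar>H x\<bar>) *
           measure \<nu> (cyl2 a b \<inter> Sigma_m K N M0 A' D' (n m) (n' m))) \<le> exp (C\<phi> / 2)"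
proof -
  let ?S = "Sigma_m K N M0 A' D' (n m) (n' m)"
  let ?P = "pressure \<phi> ?S"
  define GP where "GP = green_pairs K N M0"
  have finGP: "finite GP"
  proof (rule finite_subset)
    show "GP \<subseteq> {..<K+N} \<times> {..<K+N}" by (auto simp: GP_def green_pairs_def)
  qed simp
  have GPne: "fst p \<noteq> snd p" if "p \<in> GP" for p
    using that isA_isD_disj by (auto simp: GP_def green_pairs_def)
  have SFT_S: "x \<in> SFT (K + N) M0" if "x \<in> ?S" for x using that by (simp add: Sigma_m_def)
  show ?thesis
  proof (cases "C\<phi> < 0")
    case True
    have same: "x = y" if x: "x \<in> SFT (K + N) M0" and y: "y \<in> SFT (K + N) M0" for x y
    proof (rule ccontr)
      assume xy: "x \<noteq> y"
      then have "sdist x y > 0" by (simp add: sdist_def)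
      then have "C\<phi> * sdist x y < 0" using True by (simp add: mult_neg_pos)
      moreover have "\<bar>\<phi> x - \<phi> y\<bar> \<le> C\<phi> * sdist x y" using lip x y by blast
      ultimately show False by linarith
    qed
    have emp: "cyl2 (fst p) (snd p) \<inter> ?S = {}" if p: "p \<in> GP" for p
    proof (rule ccontr)
      assume "cyl2 (fst p) (snd p) \<inter> ?S \<noteq> {}"
      then obtain x where x: "x \<in> ?S" "x 0 = fst p" "x 1 = snd p" by (auto simp: cyl2_def)
      have "shift 1 x = x" using same[OF shift_SFT[OF SFT_S[OF x(1)]] SFT_S[OF x(1)]] .
      then have "x 1 = x 0" by (metis shift_def add_0)
      then show False using GPne[OF p] x by simp
    qed
    have "(\<Sum>(a, b)\<in>GP. (SUP x\<in>cyl2 a b \<inter> ?S. \<bar>H x\<bar>) * measure \<nu> (cyl2 a b \<inter> ?S)) = 0"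
      unfolding case_prod_unfold by (rule sum.neutral) (simp add: emp)
    then show ?thesis by (simp add: GP_def)
  next
    case False
    then have C0: "0 \<le> C\<phi>" by simp
    define g where "g = (\<lambda>j. (induced_op K N ?S \<phi> ?P ^^ j) (indicator (green K N ?S)))"
    define E where "E = exp (C\<phi> * (1/2)^2)"
    have E0: "0 \<le> E" by (simp add: E_def)
    have gnn: "0 \<le> g j x" for j x using gg_nonneg[OF lip C0] by (simp add: g_def)
    have gd: "g j x \<le> E * g j x'" if "x \<in> ?S" "x' \<in> ?S" "x 0 = x' 0" "x 1 = x' 1" for j x x'
    proof -
      have "\<forall>i<2. x i = x' i" using that by (auto simp: less_2_cases_iff)
      then show ?thesis using distortion[OF lip C0 _ that(1,2)] by (simp add: g_def E_def)
    qed
    have gc: "continuous_on ?S (g j)" for j using gg_cont[OF lip C0] by (simp add: g_def)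
    have gb: "\<exists>B. \<forall>x\<in>?S. \<bar>g j x\<bar> \<le> B" for j using gg_bound[OF lip C0] by (simp add: g_def)
    have sp: "space \<nu> = ?S"
      using sets_eq_imp_space_eq[OF nu(2)] by (simp add: space_restrict_space)
    have meas: "f \<in> borel_measurable \<nu>" if "continuous_on ?S f" for f :: "_ \<Rightarrow> real"
    proof -
      have "(borel_measurable \<nu> :: ((nat \<Rightarrow> nat) \<Rightarrow> real) set) = borel_measurable (restrict_space borel ?S)"
        by (rule measurable_cong_sets[OF nu(2) refl])
      then show ?thesis using borel_measurable_continuous_on_restrict[OF that] by simp
    qed
    have fin: "finite_measure \<nu>" by (rule prob_space.finite_measure[OF nu(1)])
    have gi: "integrable \<nu> (g j)" for j
    proof -
      obtain B where B: "\<forall>x\<in>?S. \<bar>g j x\<bar> \<le> B" using gb by blast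
      show ?thesis
        by (rule finite_measure.integrable_const_bound[OF fin _ meas[OF gc]]) (rule AE_I2, use B sp in auto)
    qed
    have gL: "g (Suc j) = induced_op K N ?S \<phi> ?P (g j)" for j by (simp add: g_def)
    have gint: "integral\<^sup>L \<nu> (g j) = integral\<^sup>L \<nu> (g 0)" for j
    proof (induction j)
      case (Suc j)
      have "integral\<^sup>L \<nu> (g (Suc j)) = (\<integral>x. induced_op K N ?S \<phi> ?P (g j) x \<partial>\<nu>)" by (simp add: gL)
      also have "\<dots> = (\<integral>x. g j x \<partial>\<nu>)" by (rule mp[OF spec[OF nu(3)] gc])
      finally show ?case using Suc by simp
    qed simp
    define I0 where "I0 = integral\<^sup>L \<nu> (g 0)"
    have gint': "integral\<^sup>L \<nu> (g j) = I0" for j unfolding I0_def by (rule gint)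
    have I01: "I0 \<le> 1"
    proof -
      have "I0 \<le> integral\<^sup>L \<nu> (\<lambda>x. 1::real)" unfolding I0_def
        by (rule integral_mono[OF gi finite_measure.integrable_const[OF fin]]) (simp add: g_def indicator_def)
      also have "\<dots> = 1" using prob_space.prob_space[OF nu(1)] by simp
      finally show ?thesis .
    qed
    define avg where "avg = (\<lambda>k x. (\<Sum>j<k. g j x) / real k)"
    have Hu: "uniform_limit ?S avg H sequentially" using H unfolding avg_def g_def .
    have Hlim: "(\<lambda>k. avg k x) \<longlonglongrightarrow> H x" if "x \<in> ?S" for x
      using tendsto_uniform_limitI[OF Hu that] .
    have avgnn: "0 \<le> avg k x" for k x unfolding avg_def by (intro divide_nonneg_nonneg sum_nonneg gnn) simp
    have avgd: "avg k x \<le> E * avg k x'" if "x \<in> ?S" "x' \<in> ?S" "x 0 = x' 0" "x 1 = x' 1" for k x x'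
    proof -
      have "(\<Sum>j<k. g j x) \<le> (\<Sum>j<k. E * g j x')" by (rule sum_mono) (rule gd[OF that])
      then have "(\<Sum>j<k. g j x) / real k \<le> (E * (\<Sum>j<k. g j x')) / real k"
        by (simp add: sum_distrib_left divide_right_mono)
      then show ?thesis by (simp add: avg_def)
    qed
    have avgi: "integrable \<nu> (avg k)" for k
      unfolding avg_def by (rule integrable_divide_zero, rule Bochner_Integration.integrable_sum, rule gi)
    have avgint: "integral\<^sup>L \<nu> (avg k) \<le> 1" for k
    proof (cases "k = 0")
      case True then show ?thesis by (simp add: avg_def)
    next
      case False
      have "integral\<^sup>L \<nu> (avg k) = integral\<^sup>L \<nu> (\<lambda>x. \<Sum>j<k. g j x) / real k"
        unfolding avg_def by (rule integral_divide_zero)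
      also have "integral\<^sup>L \<nu> (\<lambda>x. \<Sum>j<k. g j x) = (\<Sum>j<k. integral\<^sup>L \<nu> (g j))"
        by (rule Bochner_Integration.integral_sum, rule gi)
      also have "(\<Sum>j<k. integral\<^sup>L \<nu> (g j)) = real k * I0" by (simp add: gint')
      also have "real k * I0 / real k = I0" using False by simp
      finally show ?thesis using I01 by simp
    qed
    have Hnn: "0 \<le> H x" if "x \<in> ?S" for x
      by (rule LIMSEQ_le_const[OF Hlim[OF that]]) (simp add: avgnn)
    have Hd: "H x \<le> E * H x'" if "x \<in> ?S" "x' \<in> ?S" "x 0 = x' 0" "x 1 = x' 1" for x x'
      by (rule LIMSEQ_le[OF Hlim[OF that(1)] tendsto_mult_left[OF Hlim[OF that(2)]]])
        (use avgd[OF that] in auto)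
    define cp where "cp = (\<lambda>p. cyl2 (fst p) (snd p) \<inter> ?S)"
    define rf where "rf = (\<lambda>p. SOME z. z \<in> ?S \<and> z 0 = fst p \<and> z 1 = snd p)"
    have cps: "cp p \<in> sets \<nu>" for p
    proof -
      have "cyl2 (fst p) (snd p) \<in> sets borel" by (rule borel_open[OF open_cyl2])
      then show ?thesis unfolding nu(2) cp_def sets_restrict_space by auto
    qed
    have rfp: "rf p \<in> ?S \<and> rf p 0 = fst p \<and> rf p 1 = snd p" if "cp p \<noteq> {}" for p
    proof -
      have "\<exists>z. z \<in> ?S \<and> z 0 = fst p \<and> z 1 = snd p" using that by (auto simp: cp_def cyl2_def)
      then show ?thesis unfolding rf_def by (rule someI_ex)
    qed
    have cpsub: "cp p \<subseteq> ?S" for p by (auto simp: cp_def)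
    have ind_sum: "(\<Sum>p\<in>GP. indicator (cp p) x) \<le> (1::real)" for x
    proof -
      have "(\<Sum>p\<in>GP. indicator (cp p) x) = (\<Sum>p\<in>GP. if p = (x 0, x 1) then indicator ?S x else (0::real))"
        by (rule sum.cong) (auto simp: cp_def cyl2_def indicator_def)
      also have "\<dots> = (if (x 0, x 1) \<in> GP then indicator ?S x else 0)"
        using finGP by (simp add: sum.delta)
      also have "\<dots> \<le> 1" by (simp add: indicator_def)
      finally show ?thesis .
    qed
    have step1: "(\<Sum>p\<in>GP. avg k (rf p) * measure \<nu> (cp p)) \<le> E" for k
    proof -
      have "(\<Sum>p\<in>GP. avg k (rf p) * measure \<nu> (cp p)) \<le> (\<Sum>p\<in>GP. E * integral\<^sup>L \<nu> (\<lambda>x. avg k x * indicator (cp p) x))"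
      proof (rule sum_mono)
        fix p assume "p \<in> GP"
        show "avg k (rf p) * measure \<nu> (cp p) \<le> E * integral\<^sup>L \<nu> (\<lambda>x. avg k x * indicator (cp p) x)"
        proof (cases "cp p = {}")
          case True then show ?thesis by simp
        next
          case False
          note r = rfp[OF False]
          have ii: "integrable \<nu> (indicator (cp p) :: _ \<Rightarrow> real)"
            by (rule integrable_real_indicator[OF cps]) (use finite_measure.emeasure_finite[OF fin, of "cp p"] in \<open>simp add: less_top\<close>)
          have "avg k (rf p) * measure \<nu> (cp p) = integral\<^sup>L \<nu> (\<lambda>x. avg k (rf p) * indicator (cp p) x)"
            using cpsub[of p] sp by (simp add: Int_absorb2)
          also have "\<dots> \<le> integral\<^sup>L \<nu> (\<lambda>x. E * (avg k x * indicator (cp p) x))"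
          proof (rule integral_mono)
            show "integrable \<nu> (\<lambda>x. avg k (rf p) * indicator (cp p) x)"
              by (rule integrable_mult_right) (rule ii)
            show "integrable \<nu> (\<lambda>x. E * (avg k x * indicator (cp p) x))"
              by (rule integrable_mult_right, rule integrable_real_mult_indicator[OF cps avgi])
            fix x assume x: "x \<in> space \<nu>"
            show "avg k (rf p) * indicator (cp p) x \<le> E * (avg k x * indicator (cp p) x)"
            proof (cases "x \<in> cp p")
              case True
              then have "x \<in> ?S" "x 0 = fst p" "x 1 = snd p" by (auto simp: cp_def cyl2_def)
              then have "avg k (rf p) \<le> E * avg k x" using avgd[of "rf p" x k] r by simp
              then show ?thesis using True by simp
            qed simp
          qed
          also have "\<dots> = E * integral\<^sup>L \<nu> (\<lambda>x. avg k x * indicator (cp p) x)"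
            by (rule integral_mult_right_zero)
          finally show ?thesis .
        qed
      qed
      also have "\<dots> = E * integral\<^sup>L \<nu> (\<lambda>x. \<Sum>p\<in>GP. avg k x * indicator (cp p) x)"
        by (subst Bochner_Integration.integral_sum)
          (auto simp: sum_distrib_left intro: integrable_real_mult_indicator[OF cps avgi])
      also have "\<dots> \<le> E * integral\<^sup>L \<nu> (avg k)"
      proof (rule mult_left_mono[OF _ E0], rule integral_mono)
        show "integrable \<nu> (\<lambda>x. \<Sum>p\<in>GP. avg k x * indicator (cp p) x)"
          by (auto intro: integrable_real_mult_indicator[OF cps avgi])
        show "integrable \<nu> (avg k)" by (rule avgi)
        fix x
        have "(\<Sum>p\<in>GP. avg k x * indicator (cp p) x) = avg k x * (\<Sum>p\<in>GP. indicator (cp p) x)"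
          by (simp add: sum_distrib_left)
        also have "\<dots> \<le> avg k x * 1" by (rule mult_left_mono[OF ind_sum avgnn])
        finally show "(\<Sum>p\<in>GP. avg k x * indicator (cp p) x) \<le> avg k x" by simp
      qed
      also have "\<dots> \<le> E * 1" by (rule mult_left_mono[OF avgint E0])
      finally show ?thesis by simp
    qed
    have step2: "(\<Sum>p\<in>GP. H (rf p) * measure \<nu> (cp p)) \<le> E"
    proof (rule LIMSEQ_le_const2)
      show "(\<lambda>k. \<Sum>p\<in>GP. avg k (rf p) * measure \<nu> (cp p)) \<longlonglongrightarrow> (\<Sum>p\<in>GP. H (rf p) * measure \<nu> (cp p))"
      proof (rule tendsto_sum)
        fix p assume "p \<in> GP"
        show "(\<lambda>k. avg k (rf p) * measure \<nu> (cp p)) \<longlonglongrightarrow> H (rf p) * measure \<nu> (cp p)"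
        proof (cases "cp p = {}")
          case True then show ?thesis by simp
        next
          case False
          then show ?thesis using rfp[OF False] by (intro tendsto_mult_right Hlim) simp
        qed
      qed
      show "\<exists>N. \<forall>k\<ge>N. (\<Sum>p\<in>GP. avg k (rf p) * measure \<nu> (cp p)) \<le> E" using step1 by blast
    qed
    have "(\<Sum>p\<in>GP. (SUP x\<in>cp p. \<bar>H x\<bar>) * measure \<nu> (cp p)) \<le> (\<Sum>p\<in>GP. E * (H (rf p) * measure \<nu> (cp p)))"
    proof (rule sum_mono)
      fix p assume "p \<in> GP"
      show "(SUP x\<in>cp p. \<bar>H x\<bar>) * measure \<nu> (cp p) \<le> E * (H (rf p) * measure \<nu> (cp p))"
      proof (cases "cp p = {}")
        case True then show ?thesis by simp
      next
        case False
        note r = rfp[OF False]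
        have "(SUP x\<in>cp p. \<bar>H x\<bar>) \<le> E * H (rf p)"
        proof (rule cSUP_least[OF False])
          fix x assume "x \<in> cp p"
          then have x: "x \<in> ?S" "x 0 = fst p" "x 1 = snd p" by (auto simp: cp_def cyl2_def)
          have "\<bar>H x\<bar> = H x" using Hnn[OF x(1)] by simp
          also have "\<dots> \<le> E * H (rf p)" using Hd[of x "rf p"] x r by simp
          finally show "\<bar>H x\<bar> \<le> E * H (rf p)" .
        qed
        then have "(SUP x\<in>cp p. \<bar>H x\<bar>) * measure \<nu> (cp p) \<le> E * H (rf p) * measure \<nu> (cp p)"
          by (rule mult_right_mono) simp
        then show ?thesis by (simp only: mult.assoc)
      qed
    qed
    also have "\<dots> = E * (\<Sum>p\<in>GP. H (rf p) * measure \<nu> (cp p))" by (simp add: sum_distrib_left)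
    also have "\<dots> \<le> E * E" by (rule mult_left_mono[OF step2 E0])
    also have "E * E = exp (C\<phi> / 2)" unfolding E_def by (simp add: exp_add[symmetric] power2_eq_square)
    finally show ?thesis by (simp add: GP_def cp_def case_prod_unfold)
  qed
qed

end
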